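(* Let $G$ be a simple graph, $x\ne y$ vertices of $G$, and let $G'$ be obtained from $G$ by the $\diamondsuit_{xy}$-operation. Then $h_0(G)\ge h_0(G')$ and $h_1(G)\ge h_1(G')$.
   Context: All graphs are finite, undirected, without loops; $N(v)$ is the neighbourhood of $v$. The $\diamondsuit_{xy}$-operation: with $X=N(x)\setminus(N(y)\cup\{y\})$, $G'=(G-\{xv:v\in X\})\cup\{yv:v\in X\}$ on the same vertex set. $h_0(G)$ and $h_1(G)$ denote the numbers of Hamiltonian cycles and of Hamiltonian paths (as subgraphs) of $G$, respectively. *)

theory Defs
  imports Main
begin

definition simple_graph :: "'a set \<Rightarrow> 'a set set \<Rightarrow> bool" where
  "simple_graph V E \<longleftrightarrow> finite V \<and> (\<forall>e\<in>E. \<exists>u v. e = {u, v} \<and> u \<noteq> v \<and> u \<in> V \<and> v \<in> V)"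

definition nbhd :: "'a set set \<Rightarrow> 'a \<Rightarrow> 'a set" where
  "nbhd E v = {u. {v, u} \<in> E}"

definition diamond_X :: "'a set set \<Rightarrow> 'a \<Rightarrow> 'a \<Rightarrow> 'a set" where
  "diamond_X E x y = nbhd E x - (nbhd E y \<union> {y})"

definition diamond :: "'a set set \<Rightarrow> 'a \<Rightarrow> 'a \<Rightarrow> 'a set set" where
  "diamond E x y = (E - {{x, v} | v. v \<in> diamond_X E x y}) \<union> {{y, v} | v. v \<in> diamond_X E x y}"

definition path_edges :: "'a list \<Rightarrow> 'a set set" where
  "path_edges vs = {{vs ! i, vs ! Suc i} | i. Suc i < length vs}"

text \<open>Hamiltonian paths as subgraphs (identified by their edge sets, the vertex set being V).\<close>
definition ham_paths :: "'a set \<Rightarrow> 'a set set \<Rightarrow> 'a set set set" where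
  "ham_paths V E = {path_edges vs | vs. distinct vs \<and> set vs = V \<and> path_edges vs \<subseteq> E}"

definition ham_cycles :: "'a set \<Rightarrow> 'a set set \<Rightarrow> 'a set set set" where
  "ham_cycles V E = {path_edges vs \<union> {{last vs, hd vs}} | vs.
      distinct vs \<and> set vs = V \<and> length vs \<ge> 3 \<and> path_edges vs \<union> {{last vs, hd vs}} \<subseteq> E}"

definition h0 :: "'a set \<Rightarrow> 'a set set \<Rightarrow> nat" where
  "h0 V E = card (ham_cycles V E)"

definition h1 :: "'a set \<Rightarrow> 'a set set \<Rightarrow> nat" where
  "h1 V E = card (ham_paths V E)"

end

theory Submission imports Defs begin

lemma pe_Nil[simp]: "path_edges [] = {}" by (simp add: path_edges_def)
lemma pe_single[simp]: "path_edges [a] = {}" by (simp add: path_edges_def)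
lemma pe_Cons2[simp]: "path_edges (a # b # t) = insert {a,b} (path_edges (b # t))"
proof (rule set_eqI, rule iffI)
  fix e assume "e \<in> path_edges (a # b # t)"
  then obtain i where i: "Suc i < length (a#b#t)" "e = {(a#b#t)!i, (a#b#t)!Suc i}"
    unfolding path_edges_def by blast
  show "e \<in> insert {a,b} (path_edges (b # t))"
  proof (cases i)
    case 0 then show ?thesis using i by simp
  next
    case (Suc j) then have "Suc j < length (b#t)" "e = {(b#t)!j, (b#t)!Suc j}" using i by auto
    then show ?thesis unfolding path_edges_def by blast
  qed
next
  fix e assume "e \<in> insert {a,b} (path_edges (b # t))"
  then show "e \<in> path_edges (a # b # t)"
  proof
    assume "e = {a,b}" then have "e = {(a#b#t)!0, (a#b#t)!Suc 0}" by simp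
    then show ?thesis unfolding path_edges_def by fastforce
  next
    assume "e \<in> path_edges (b # t)"
    then obtain j where j: "Suc j < length (b#t)" "e = {(b#t)!j, (b#t)!Suc j}"
      unfolding path_edges_def by blast
    then have "Suc (Suc j) < length (a#b#t)" "e = {(a#b#t)!Suc j, (a#b#t)!Suc (Suc j)}" by auto
    then show ?thesis unfolding path_edges_def by blast
  qed
qed

lemma pe_Cons: "path_edges (a # t) = (if t = [] then {} else insert {a, hd t} (path_edges t))"
  by (cases t) auto

lemma pe_snoc: "path_edges (xs @ [b]) = (if xs = [] then {} else insert {last xs, b} (path_edges xs))"
proof (induction xs)
  case (Cons a t) then show ?case by (cases t) auto
qed simp

lemma pe_rev[simp]: "path_edges (rev xs) = path_edges xs"
proof (induction xs)
  case (Cons a t)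
  have "path_edges (rev (a # t)) = path_edges (rev t @ [a])" by simp
  also have "\<dots> = (if rev t = [] then {} else insert {last (rev t), a} (path_edges (rev t)))"
    by (rule pe_snoc)
  also have "\<dots> = (if t = [] then {} else insert {a, hd t} (path_edges t))"
    using Cons by (simp add: last_rev insert_commute)
  also have "\<dots> = path_edges (a # t)" by (simp add: pe_Cons)
  finally show ?case .
qed simp

lemma pe_app2: "path_edges (xs @ b # ys) = path_edges (xs @ [b]) \<union> path_edges (b # ys)"
proof (induction xs)
  case Nil then show ?case by simp
next
  case (Cons a t) then show ?case by (cases t) auto
qed

lemma pe_map: "path_edges (map f xs) = (image f) ` path_edges xs"
proof (induction xs)
  case (Cons a t) then show ?case by (cases t) auto
qed simp

lemma pe_sub: "e \<in> path_edges xs \<Longrightarrow> \<exists>a b. e = {a,b} \<and> a \<in> set xs \<and> b \<in> set xs \<and> (distinct xs \<longrightarrow> a \<noteq> b)"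
  unfolding path_edges_def
  by (auto simp: nth_eq_iff_index_eq) (metis Suc_lessD n_not_Suc_n nth_eq_iff_index_eq nth_mem)


definition cyc :: "'a list \<Rightarrow> 'a set set" where
  "cyc ws = path_edges ws \<union> {{last ws, hd ws}}"

lemma ham_cycles_cyc: "ham_cycles V E = {cyc vs | vs. distinct vs \<and> set vs = V \<and> length vs \<ge> 3 \<and> cyc vs \<subseteq> E}"
  unfolding ham_cycles_def cyc_def by simp

lemma cyc_eq: "ws \<noteq> [] \<Longrightarrow> cyc ws = path_edges (ws @ [hd ws])"
  unfolding cyc_def by (simp add: pe_snoc)

lemma cyc_rot: "cyc (as @ x # bs) = cyc (x # bs @ as)"
proof (cases as)
  case Nil then show ?thesis by simp
next
  case (Cons h t)
  have "cyc (as @ x # bs) = path_edges ((h#t) @ x # (bs @ [h]))"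
    using Cons by (simp add: cyc_eq)
  also have "\<dots> = path_edges ((h#t) @ [x]) \<union> path_edges (x # bs @ [h])"
    by (rule pe_app2)
  also have "\<dots> = path_edges ((x#bs) @ [h]) \<union> path_edges (h # t @ [x])" by auto
  also have "\<dots> = path_edges ((x#bs) @ h # (t @ [x]))"
    by (rule pe_app2[symmetric])
  also have "\<dots> = cyc (x # bs @ as)" using Cons by (simp add: cyc_eq)
  finally show ?thesis .
qed

lemma cyc_x_form: "L \<noteq> [] \<Longrightarrow> cyc (x # L) = insert {x, hd L} (insert {last L, x} (path_edges L))"
  unfolding cyc_def by (auto simp: pe_Cons)

lemma pe_notin: "e \<in> path_edges L \<Longrightarrow> x \<notin> set L \<Longrightarrow> x \<notin> e"
  using pe_sub by fastforce

lemma pe_inj: "distinct L1 \<Longrightarrow> distinct L2 \<Longrightarrow> set L1 = set L2 \<Longrightarrow> hd L1 = hd L2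
   \<Longrightarrow> path_edges L1 = path_edges L2 \<Longrightarrow> L1 = L2"
proof (induction L1 arbitrary: L2)
  case Nil then show ?case by simp
next
  case (Cons a t)
  then obtain t2 where L2: "L2 = a # t2" by (cases L2) auto
  have st: "set t = set t2" using Cons.prems L2 by auto
  show ?case
  proof (cases "t = []")
    case True then show ?thesis using st L2 by simp
  next
    case False
    then have t2ne: "t2 \<noteq> []" using st by auto
    have a1: "a \<notin> set t" "a \<notin> set t2" using Cons.prems L2 by auto
    have e1: "path_edges (a#t) = insert {a, hd t} (path_edges t)" using False by (simp add: pe_Cons)
    have e2: "path_edges (a#t2) = insert {a, hd t2} (path_edges t2)" using t2ne by (simp add: pe_Cons)
    have "{a, hd t2} \<in> path_edges (a#t)" using Cons.prems(5) L2 e2 by auto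
    then have "{a, hd t2} = {a, hd t} \<or> {a, hd t2} \<in> path_edges t" using e1 by auto
    moreover have "{a, hd t2} \<notin> path_edges t" using pe_notin[of _ t a] a1 by auto
    ultimately have "{a, hd t2} = {a, hd t}" by auto
    moreover have "hd t2 \<noteq> a" using a1 t2ne by (metis hd_in_set)
    ultimately have hh: "hd t = hd t2" by (auto simp: doubleton_eq_iff)
    have n1: "{a, hd t} \<notin> path_edges t" using pe_notin[of _ t a] a1 by auto
    have n2: "{a, hd t2} \<notin> path_edges t2" using pe_notin[of _ t2 a] a1 by auto
    have "path_edges t = path_edges t2"
      using e1 e2 n1 n2 Cons.prems(5) L2 hh by (metis insert_ident)
    then have "t = t2" using Cons.IH[of t2] Cons.prems L2 st hh by auto
    then show ?thesis using L2 by simp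
  qed
qed

lemma cyc_inj:
  assumes "distinct (x#L1)" "distinct (x#L2)" "set L1 = set L2" "L1 \<noteq> []"
    "cyc (x#L1) = cyc (x#L2)"
  shows "L2 = L1 \<or> L2 = rev L1"
proof -
  have L2ne: "L2 \<noteq> []" using assms by auto
  have xn: "x \<notin> set L1" "x \<notin> set L2" using assms by auto
  have pe: "path_edges L = {e \<in> cyc (x#L). x \<notin> e}" if "L \<noteq> []" "x \<notin> set L" for L
    using that cyc_x_form[of L x] pe_notin[of _ L x] by auto
  have pe12: "path_edges L1 = path_edges L2" using pe[of L1] pe[of L2] assms xn L2ne by simp
  have "{x, hd L2} \<in> cyc (x#L1)" using assms(5) cyc_x_form[OF L2ne] by auto
  then have "{x, hd L2} = {x, hd L1} \<or> {x, hd L2} = {last L1, x} \<or> {x, hd L2} \<in> path_edges L1"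
    using cyc_x_form[OF assms(4)] by auto
  moreover have "{x, hd L2} \<notin> path_edges L1" using pe_notin[of _ L1 x] xn by auto
  moreover have "hd L2 \<noteq> x" using xn L2ne by (metis hd_in_set)
  ultimately have "hd L2 = hd L1 \<or> hd L2 = last L1" by (auto simp: doubleton_eq_iff)
  then show ?thesis
  proof
    assume "hd L2 = hd L1"
    then show ?thesis using pe_inj[of L1 L2] assms pe12 by auto
  next
    assume "hd L2 = last L1"
    then have "rev L1 = L2" using pe_inj[of "rev L1" L2] assms pe12
      by (auto simp: hd_rev)
    then show ?thesis by auto
  qed
qed

definition seg :: "'a \<Rightarrow> 'a list \<Rightarrow> 'a \<Rightarrow> 'a set set" where
  "seg a S b = path_edges (a # S @ [b])"

definition CC :: "'a \<Rightarrow> 'a \<Rightarrow> 'a list \<Rightarrow> 'a list \<Rightarrow> 'a set set" where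
  "CC x y P R = seg x P y \<union> seg x R y"

definition pok :: "'a set \<Rightarrow> 'a \<Rightarrow> 'a \<Rightarrow> 'a list \<Rightarrow> 'a list \<Rightarrow> bool" where
  "pok V x y P R \<longleftrightarrow> distinct (x # y # P @ R) \<and> set (x # y # P @ R) = V \<and> P @ R \<noteq> []"

lemma CC_cyc: "CC x y P R = cyc (x # P @ y # rev R)"
proof -
  have "cyc (x # P @ y # rev R) = path_edges ((x # P) @ y # (rev R @ [x]))"
    by (simp add: cyc_eq)
  also have "\<dots> = path_edges ((x#P) @ [y]) \<union> path_edges (y # rev R @ [x])"
    by (rule pe_app2)
  also have "path_edges (y # rev R @ [x]) = path_edges (rev (x # R @ [y]))" by simp
  also have "\<dots> = path_edges (x # R @ [y])" by (rule pe_rev)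
  finally show ?thesis unfolding CC_def seg_def by simp
qed

lemma CC_sym: "CC x y P R = CC x y R P"
  unfolding CC_def by auto

lemma CC_in_HC: "pok V x y P R \<Longrightarrow> CC x y P R \<subseteq> E \<Longrightarrow> CC x y P R \<in> ham_cycles V E"
  unfolding ham_cycles_cyc pok_def CC_cyc
  by (rule CollectI, rule exI[of _ "x # P @ y # rev R"]) (auto simp: Suc_le_eq)

lemma HC_rep:
  assumes "H \<in> ham_cycles V E" "x \<in> V" "y \<in> V" "x \<noteq> y"
  shows "\<exists>P R. pok V x y P R \<and> H = CC x y P R"
proof -
  obtain vs where vs: "H = cyc vs" "distinct vs" "set vs = V" "length vs \<ge> 3"
    using assms(1) unfolding ham_cycles_cyc by auto
  obtain as bs where ab: "vs = as @ x # bs" using split_list[of x vs] vs assms by auto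
  define L where "L = bs @ as"
  have "y \<in> set L" using ab vs assms unfolding L_def by auto
  then obtain P Q where PQ: "L = P @ y # Q" using split_list by metis
  have H: "H = cyc (x # P @ y # Q)" using vs(1) ab cyc_rot PQ L_def by metis
  have dv: "distinct (x # bs @ as)" "set (x # bs @ as) = V" "length (x#bs@as) = length vs"
    using vs ab by auto
  then have "distinct (x # L)" "set (x # L) = V" "length (x#L) \<ge> 3"
    unfolding L_def using vs(4) by auto
  then have d: "distinct (x # P @ y # Q)" "set (x # P @ y # Q) = V" "length (x # P @ y # Q) \<ge> 3"
    using PQ by simp_all
  have "pok V x y P (rev Q)" using d unfolding pok_def by auto
  moreover have "H = CC x y P (rev Q)" using H by (simp add: CC_cyc)
  ultimately show ?thesis by blast
qed

lemma CC_fiber: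
  assumes "pok V x y P1 R1" "pok V x y P2 R2" "CC x y P1 R1 = CC x y P2 R2"
  shows "(P2 = P1 \<and> R2 = R1) \<or> (P2 = R1 \<and> R2 = P1)"
proof -
  have "P2 @ y # rev R2 = P1 @ y # rev R1 \<or> P2 @ y # rev R2 = rev (P1 @ y # rev R1)"
    using assms unfolding pok_def CC_cyc
    by (intro cyc_inj[where x=x]) (auto simp: ac_simps)
  moreover have "y \<notin> set P1" "y \<notin> set R1" "y \<notin> set P2" "y \<notin> set R2"
    using assms unfolding pok_def by auto
  ultimately show ?thesis by (auto simp: append_Cons_eq_iff)
qed

lemma HC_finite: "finite V \<Longrightarrow> finite (ham_cycles V E)"
proof -
  assume f: "finite V"
  have "ham_cycles V E \<subseteq> Pow (Pow V)"
  proof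
    fix H assume "H \<in> ham_cycles V E"
    then obtain vs where "H = cyc vs" "set vs = V" "length vs \<ge> 3" unfolding ham_cycles_cyc by auto
    then have ne: "vs \<noteq> []" by auto
    have "e \<subseteq> V" if "e \<in> H" for e
    proof -
      have "e \<in> path_edges vs \<or> e = {last vs, hd vs}" using that \<open>H = cyc vs\<close> unfolding cyc_def by auto
      then show ?thesis
      proof
        assume "e \<in> path_edges vs"
        then obtain a b where "e = {a,b}" "a \<in> set vs" "b \<in> set vs" using pe_sub by blast
        then show ?thesis using \<open>set vs = V\<close> by auto
      next
        assume "e = {last vs, hd vs}"
        then show ?thesis using ne \<open>set vs = V\<close> hd_in_set last_in_set by blast
      qed
    qed
    then show "H \<in> Pow (Pow V)" by auto
  qed
  then show ?thesis using f by (meson finite_Pow_iff finite_subset)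
qed


definition flipX :: "'a set \<Rightarrow> 'a list \<Rightarrow> 'a list" where
  "flipX X S = (if S \<noteq> [] \<and> last S \<in> X then rev S else S)"

definition unflipX :: "'a set \<Rightarrow> 'a list \<Rightarrow> 'a list" where
  "unflipX X S = (if S \<noteq> [] \<and> hd S \<in> X then rev S else S)"

lemma flipX_set[simp]: "set (flipX X S) = set S" and flipX_dist[simp]: "distinct (flipX X S) = distinct S"
  and flipX_Nil[simp]: "(flipX X S = []) = (S = [])"
  unfolding flipX_def by auto

lemma seg_form: "S \<noteq> [] \<Longrightarrow> seg a S b = insert {a, hd S} (insert {last S, b} (path_edges S))"
  unfolding seg_def by (auto simp: pe_Cons pe_snoc)

lemma seg_Nil: "seg a [] b = {{a,b}}" unfolding seg_def by simp

context
  fixes E :: "'a set set" and x y :: 'a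
  assumes xy: "x \<noteq> y" and noloop: "{x} \<notin> E"
begin

lemma K1: "a \<noteq> x \<Longrightarrow> a \<noteq> y \<Longrightarrow> b \<noteq> x \<Longrightarrow> b \<noteq> y \<Longrightarrow> {a,b} \<in> diamond E x y \<Longrightarrow> {a,b} \<in> E"
  unfolding diamond_def by (auto simp: doubleton_eq_iff)

lemma K2: "v \<noteq> x \<Longrightarrow> v \<noteq> y \<Longrightarrow> {x,v} \<in> diamond E x y \<Longrightarrow> {x,v} \<in> E \<and> {y,v} \<in> E"
  using xy noloop unfolding diamond_def diamond_X_def nbhd_def by (auto simp: doubleton_eq_iff)

lemma K3: "v \<noteq> x \<Longrightarrow> v \<noteq> y \<Longrightarrow> {v,y} \<in> diamond E x y \<Longrightarrow> v \<notin> diamond_X E x y \<Longrightarrow> {v,y} \<in> E"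
  using xy unfolding diamond_def by (auto simp: doubleton_eq_iff)

lemma K4: "{x,y} \<in> diamond E x y \<Longrightarrow> {x,y} \<in> E"
  using xy noloop unfolding diamond_def diamond_X_def nbhd_def by (auto simp: doubleton_eq_iff)

lemma K5: "v \<in> diamond_X E x y \<Longrightarrow> {x,v} \<in> E"
  unfolding diamond_X_def nbhd_def by auto

lemma K6: "v \<noteq> x \<Longrightarrow> v \<noteq> y \<Longrightarrow> {x,v} \<in> diamond E x y \<Longrightarrow> v \<notin> diamond_X E x y"
  using K2[of v] unfolding diamond_X_def nbhd_def by auto

lemma seg_flip:
  assumes "distinct S" "x \<notin> set S" "y \<notin> set S" "seg x S y \<subseteq> diamond E x y"
  shows "seg x (flipX (diamond_X E x y) S) y \<subseteq> E"
proof (cases "S = []")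
  case True then show ?thesis using assms K4 by (simp add: seg_Nil flipX_def)
next
  case False
  let ?X = "diamond_X E x y"
  have hx: "hd S \<noteq> x" "hd S \<noteq> y" "last S \<noteq> x" "last S \<noteq> y"
    using False assms by (metis hd_in_set last_in_set)+
  have sf: "seg x S y = insert {x, hd S} (insert {last S, y} (path_edges S))"
    using seg_form[OF False] .
  have peS: "path_edges S \<subseteq> E"
  proof
    fix e assume e: "e \<in> path_edges S"
    then obtain a b where "e = {a,b}" "a \<in> set S" "b \<in> set S" using pe_sub by blast
    moreover have "e \<in> diamond E x y" using e sf assms(4) by auto
    ultimately show "e \<in> E" using K1[of a b] assms by auto
  qed
  have hE: "{x, hd S} \<in> E \<and> {y, hd S} \<in> E" using K2[of "hd S"] hx sf assms(4) by auto
  show ?thesis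
  proof (cases "last S \<in> ?X")
    case True
    have "seg x (flipX ?X S) y = insert {x, last S} (insert {hd S, y} (path_edges S))"
      using True False by (simp add: flipX_def seg_form hd_rev last_rev)
    then show ?thesis using peS hE K5[OF True] by (auto simp: insert_commute doubleton_eq_iff)
  next
    case nf: False
    have "{last S, y} \<in> E" using K3[of "last S"] hx nf sf assms(4) by auto
    then show ?thesis using nf peS hE sf by (simp add: flipX_def)
  qed
qed

lemma unflip_flip:
  assumes "distinct S" "x \<notin> set S" "y \<notin> set S" "seg x S y \<subseteq> diamond E x y"
  shows "unflipX (diamond_X E x y) (flipX (diamond_X E x y) S) = S"
proof (cases "S = []")
  case True then show ?thesis by (simp add: flipX_def unflipX_def)
next
  case False
  have hx: "hd S \<noteq> x" "hd S \<noteq> y" using False assms by (metis hd_in_set)+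
  have "hd S \<notin> diamond_X E x y" using K6[of "hd S"] hx seg_form[OF False] assms(4) by auto
  then show ?thesis using False by (simp add: flipX_def unflipX_def hd_rev)
qed

lemma cycle_main:
  assumes "x \<in> V" "y \<in> V" "finite V"
  shows "card (ham_cycles V (diamond E x y)) \<le> card (ham_cycles V E)"
proof -
  let ?X = "diamond_X E x y"
  let ?E' = "diamond E x y"
  define rp where "rp H = (SOME pr. pok V x y (fst pr) (snd pr) \<and> H = CC x y (fst pr) (snd pr))" for H
  define f where "f H = CC x y (flipX ?X (fst (rp H))) (flipX ?X (snd (rp H)))" for H
  have rp: "pok V x y (fst (rp H)) (snd (rp H)) \<and> H = CC x y (fst (rp H)) (snd (rp H))"
    if HH: "H \<in> ham_cycles V ?E'" for H
  proof -
    obtain P R where "pok V x y P R \<and> H = CC x y P R" using HC_rep[OF HH assms(1,2) xy] by blast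
    then have "\<exists>pr. pok V x y (fst pr) (snd pr) \<and> H = CC x y (fst pr) (snd pr)"
      by (intro exI[of _ "(P,R)"]) simp
    then show ?thesis unfolding rp_def by (rule someI_ex)
  qed
  have segs: "seg x (fst (rp H)) y \<subseteq> ?E' \<and> seg x (snd (rp H)) y \<subseteq> ?E'"
    if "H \<in> ham_cycles V ?E'" for H
  proof -
    have "H \<subseteq> ?E'" using that unfolding ham_cycles_def by auto
    then show ?thesis using rp[OF that] unfolding CC_def by auto
  qed
  have pk: "pok V x y (flipX ?X P) (flipX ?X R)" if "pok V x y P R" for P R
    using that unfolding pok_def by auto
  have img: "f ` ham_cycles V ?E' \<subseteq> ham_cycles V E"
  proof
    fix K assume "K \<in> f ` ham_cycles V ?E'"
    then obtain H where H: "H \<in> ham_cycles V ?E'" "K = f H" by blast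
    let ?P = "fst (rp H)" and ?R = "snd (rp H)"
    have po: "pok V x y ?P ?R" using rp[OF H(1)] by blast
    have "seg x (flipX ?X ?P) y \<subseteq> E" "seg x (flipX ?X ?R) y \<subseteq> E"
      using seg_flip[of ?P] seg_flip[of ?R] segs[OF H(1)] po unfolding pok_def by auto
    then have "CC x y (flipX ?X ?P) (flipX ?X ?R) \<subseteq> E" unfolding CC_def by auto
    then show "K \<in> ham_cycles V E" using CC_in_HC[OF pk[OF po]] H(2) unfolding f_def by auto
  qed
  have inj: "inj_on f (ham_cycles V ?E')"
  proof (rule inj_onI)
    fix H1 H2 assume H1: "H1 \<in> ham_cycles V ?E'" and H2: "H2 \<in> ham_cycles V ?E'" and eq: "f H1 = f H2"
    let ?P1 = "fst (rp H1)" and ?R1 = "snd (rp H1)" and ?P2 = "fst (rp H2)" and ?R2 = "snd (rp H2)"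
    have po1: "pok V x y ?P1 ?R1" and po2: "pok V x y ?P2 ?R2" using rp H1 H2 by blast+
    have uf: "unflipX ?X (flipX ?X S) = S" if "S = ?P1 \<or> S = ?R1 \<or> S = ?P2 \<or> S = ?R2" for S
      using that segs[OF H1] segs[OF H2] po1 po2 unflip_flip[of S] unfolding pok_def by auto
    have "(flipX ?X ?P2 = flipX ?X ?P1 \<and> flipX ?X ?R2 = flipX ?X ?R1) \<or>
          (flipX ?X ?P2 = flipX ?X ?R1 \<and> flipX ?X ?R2 = flipX ?X ?P1)"
      using CC_fiber[OF pk[OF po1] pk[OF po2]] eq unfolding f_def by auto
    then have "(?P2 = ?P1 \<and> ?R2 = ?R1) \<or> (?P2 = ?R1 \<and> ?R2 = ?P1)"
      using uf by metis
    then show "H1 = H2" using rp[OF H1] rp[OF H2] CC_sym by metis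
  qed
  show ?thesis using card_inj_on_le[OF inj img HC_finite[OF assms(3)]] .
qed

end


lemma endpoint_iff:
  assumes "distinct vs" "length vs \<ge> 2" "v \<in> set vs"
  shows "v \<in> {hd vs, last vs} \<longleftrightarrow> \<not>(\<exists>a b. a \<noteq> b \<and> {v,a} \<in> path_edges vs \<and> {v,b} \<in> path_edges vs)"
proof
  have hdcase: "\<not>(\<exists>a b. a \<noteq> b \<and> {hd ws,a} \<in> path_edges ws \<and> {hd ws,b} \<in> path_edges ws)"
    if "distinct ws" "length ws \<ge> 2" for ws :: "'a list"
  proof -
    have "length (tl ws) \<ge> 1" using that by simp
    then have tne: "tl ws \<noteq> []" by (metis le_zero_eq list.size(3) one_neq_zero)
    obtain v t where ws: "ws = v # t" "t \<noteq> []" using tne by (cases ws) auto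
    have vt: "v \<notin> set t" using that ws by auto
    have pe: "path_edges ws = insert {v, hd t} (path_edges t)" using ws by (simp add: pe_Cons)
    have hv: "hd t \<noteq> v" using vt ws by (metis hd_in_set)
    have "a = hd t" if "{v,a} \<in> path_edges ws" for a
    proof -
      have "{v,a} \<notin> path_edges t" using pe_notin[of _ t v] vt by auto
      then have "{v,a} = {v, hd t}" using that pe by auto
      then show ?thesis using hv by (auto simp: doubleton_eq_iff)
    qed
    then show ?thesis using ws by auto
  qed
  assume "v \<in> {hd vs, last vs}"
  then show "\<not>(\<exists>a b. a \<noteq> b \<and> {v,a} \<in> path_edges vs \<and> {v,b} \<in> path_edges vs)"
  proof
    assume "v = hd vs" then show ?thesis using hdcase[OF assms(1,2)] by simp
  next
    assume "v \<in> {last vs}"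
    then have "v = hd (rev vs)" using assms by (simp add: hd_rev)
    then show ?thesis using hdcase[of "rev vs"] assms by simp
  qed
next
  assume na: "\<not>(\<exists>a b. a \<noteq> b \<and> {v,a} \<in> path_edges vs \<and> {v,b} \<in> path_edges vs)"
  show "v \<in> {hd vs, last vs}"
  proof (rule ccontr)
    assume nv: "v \<notin> {hd vs, last vs}"
    obtain as bs where ab: "vs = as @ v # bs" using split_list assms(3) by metis
    have "as \<noteq> []" using nv ab by auto
    moreover have "bs \<noteq> []" using nv ab by auto
    moreover have "path_edges vs = path_edges (as @ [v]) \<union> path_edges (v # bs)" using ab pe_app2 by metis
    ultimately have "{last as, v} \<in> path_edges vs" "{v, hd bs} \<in> path_edges vs"
      by (auto simp: pe_snoc pe_Cons)
    moreover have "last as \<noteq> hd bs"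
    proof -
      have "last as \<in> set as" "hd bs \<in> set bs" using \<open>as \<noteq> []\<close> \<open>bs \<noteq> []\<close> by auto
      moreover have "set as \<inter> set bs = {}" using assms(1) ab by auto
      ultimately show ?thesis by (metis disjoint_iff)
    qed
    ultimately show False using na by (metis insert_commute)
  qed
qed

lemma endpoints_eq:
  assumes "distinct vs" "length vs \<ge> 2" "distinct ws" "set ws = set vs" "path_edges vs = path_edges ws"
  shows "{hd vs, last vs} = {hd ws, last ws}"
proof -
  have lw: "length ws \<ge> 2" using assms distinct_card by metis
  have "{hd us, last us} = {v \<in> set us. \<not>(\<exists>a b. a \<noteq> b \<and> {v,a} \<in> path_edges us \<and> {v,b} \<in> path_edges us)}"
    if "distinct us" "length us \<ge> 2" for us :: "'a list"
    using endpoint_iff[OF that] that by (auto, (metis hd_in_set last_in_set list.size(3) not_numeral_le_zero)+)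
  from this[of vs] this[of ws] assms lw show ?thesis by simp
qed

definition liftV :: "'a set \<Rightarrow> 'a option set" where "liftV V = insert None (Some ` V)"
definition liftE :: "'a set \<Rightarrow> 'a set set \<Rightarrow> 'a option set set" where
  "liftE V E = (image Some) ` E \<union> (\<lambda>v. {None, Some v}) ` V"

lemma imgSome_eq[simp]: "(Some ` A = Some ` B) = (A = B)"
  by (simp add: inj_image_eq_iff)

lemma None_notin_imgSome[simp]: "Some ` A \<noteq> {None, b}" "Some ` A \<noteq> {b, None}"
  by auto

lemma imgSome_in_liftE[simp]: "(Some ` e \<in> liftE V E) = (e \<in> E)"
  unfolding liftE_def by auto

lemma nbhd_lift: "v \<in> V \<Longrightarrow> nbhd (liftE V E) (Some v) = insert None (Some ` nbhd E v)"
proof (rule set_eqI)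
  fix u assume vV: "v \<in> V"
  show "u \<in> nbhd (liftE V E) (Some v) \<longleftrightarrow> u \<in> insert None (Some ` nbhd E v)"
  proof (cases u)
    case None
    have "{Some v, None} \<in> liftE V E" unfolding liftE_def using vV by (auto simp: insert_commute)
    then show ?thesis using None unfolding nbhd_def by simp
  next
    case (Some w)
    have "{Some v, Some w} = Some ` {v,w}" by simp
    then have "({Some v, Some w} \<in> liftE V E) = ({v,w} \<in> E)" by (metis imgSome_in_liftE)
    then show ?thesis using Some unfolding nbhd_def by auto
  qed
qed

lemma diamondX_lift: "x \<in> V \<Longrightarrow> y \<in> V \<Longrightarrow> diamond_X (liftE V E) (Some x) (Some y) = Some ` diamond_X E x y"
  unfolding diamond_X_def by (auto simp: nbhd_lift)

lemma diamond_lift: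
  assumes "x \<in> V" "y \<in> V" "x \<noteq> y"
  shows "diamond (liftE V E) (Some x) (Some y) = liftE V (diamond E x y)"
proof -
  let ?X = "diamond_X E x y"
  have r: "{{Some x, v} |v. v \<in> Some ` ?X} = image Some ` {{x, v} |v. v \<in> ?X}"
    by (simp add: Setcompr_eq_image image_image)
  have a: "{{Some y, v} |v. v \<in> Some ` ?X} = image Some ` {{y, v} |v. v \<in> ?X}"
    by (simp add: Setcompr_eq_image image_image)
  have "diamond (liftE V E) (Some x) (Some y) =
     (liftE V E - image Some ` {{x, v} |v. v \<in> ?X}) \<union> image Some ` {{y, v} |v. v \<in> ?X}"
    unfolding diamond_def diamondX_lift[OF assms(1,2)] r a ..
  also have "\<dots> = liftE V (diamond E x y)"
  proof -
    have injS: "inj (image Some :: 'a set \<Rightarrow> 'a option set)" by (simp add: inj_def)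
    have dis: "(\<lambda>v. {None, Some v}) ` V \<inter> image Some ` {{x, v} |v. v \<in> ?X} = {}" by auto
    show ?thesis
      unfolding liftE_def diamond_def image_Un image_set_diff[OF injS] using dis by blast
  qed
  finally show ?thesis .
qed

lemma noloop_lift: "{x} \<notin> E \<Longrightarrow> {Some x} \<notin> liftE V E"
proof -
  assume "{x} \<notin> E"
  moreover have "{Some x} = Some ` {x}" by simp
  ultimately show ?thesis by (metis imgSome_in_liftE)
qed

lemma cyc_lift:
  assumes "vs \<noteq> []"
  shows "cyc (None # map Some vs) = insert {None, Some (hd vs)} (insert {Some (last vs), None} (image Some ` path_edges vs))"
  using cyc_x_form[of "map Some vs" None] assms by (simp add: pe_map hd_map last_map)

lemma g_lift:
  assumes "vs \<noteq> []"
  shows "{e. Some ` e \<in> cyc (None # map Some vs)} = path_edges vs"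
  using assms by (auto simp: cyc_lift)

lemma HC_lift_rep:
  assumes "C \<in> ham_cycles (liftV V) (liftE V E)"
  shows "\<exists>vs. distinct vs \<and> set vs = V \<and> vs \<noteq> [] \<and> C = cyc (None # map Some vs) \<and> path_edges vs \<subseteq> E"
proof -
  obtain ws where ws: "C = cyc ws" "distinct ws" "set ws = liftV V" "length ws \<ge> 3" "cyc ws \<subseteq> liftE V E"
    using assms unfolding ham_cycles_cyc by auto
  obtain as bs where ab: "ws = as @ None # bs" using split_list[of None ws] ws(3) unfolding liftV_def by auto
  define L where "L = bs @ as"
  have C: "C = cyc (None # L)" using ws(1) ab cyc_rot L_def by metis
  have dL: "distinct (None # L)" "set (None # L) = liftV V" "length (None # L) = length ws"
    using ws(2,3) ab unfolding L_def by auto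
  have nL: "None \<notin> set L" using dL(1) by simp
  have "set L = (insert None (set L)) - {None}" using nL by auto
  also have "insert None (set L) = liftV V" using dL(2) by simp
  finally have sL: "set L = Some ` V" unfolding liftV_def by auto
  define vs where "vs = map the L"
  have allS: "\<forall>z \<in> set L. Some (the z) = z" using sL by auto
  have "map (Some \<circ> the) L = L" using allS by (intro map_idI) auto
  then have L: "L = map Some vs" unfolding vs_def by simp
  have dvs: "distinct vs" using dL(1) L by (simp add: distinct_map)
  have svs: "set vs = V" using sL L by (simp add: inj_image_eq_iff)
  have ne: "vs \<noteq> []" using dL(3) ws(4) L by auto
  have "image Some ` path_edges vs \<subseteq> liftE V E" using ws(5) ws(1) C L cyc_lift[OF ne] by auto
  then have "path_edges vs \<subseteq> E" by auto
  then show ?thesis using dvs svs ne C L by blast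
qed

lemma paths_cycles:
  assumes "x \<in> V" "y \<in> V" "x \<noteq> y" "finite V"
  shows "card (ham_paths V E) = card (ham_cycles (liftV V) (liftE V E))"
proof -
  let ?HC = "ham_cycles (liftV V) (liftE V E)"
  define g where "g C = {e. Some ` e \<in> C}" for C :: "'a option set set"
  have cV: "card V \<ge> 2"
  proof -
    have "{x,y} \<subseteq> V" using assms by auto
    then have "card {x,y} \<le> card V" using assms(4) card_mono by blast
    then show ?thesis using assms(3) by simp
  qed
  have img: "g ` ?HC = ham_paths V E"
  proof
    show "g ` ?HC \<subseteq> ham_paths V E"
    proof
      fix P assume "P \<in> g ` ?HC"
      then obtain C where "C \<in> ?HC" "P = g C" by blast
      then obtain vs where "distinct vs" "set vs = V" "vs \<noteq> []" "C = cyc (None # map Some vs)" "path_edges vs \<subseteq> E"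
        using HC_lift_rep by blast
      then show "P \<in> ham_paths V E" unfolding ham_paths_def using \<open>P = g C\<close> g_lift unfolding g_def by auto
    qed
  next
    show "ham_paths V E \<subseteq> g ` ?HC"
    proof
      fix P assume "P \<in> ham_paths V E"
      then obtain vs where vs: "P = path_edges vs" "distinct vs" "set vs = V" "path_edges vs \<subseteq> E"
        unfolding ham_paths_def by auto
      have lv: "length vs \<ge> 2" using vs cV distinct_card by metis
      then have ne: "vs \<noteq> []" by auto
      have "cyc (None # map Some vs) \<subseteq> liftE V E"
        unfolding cyc_lift[OF ne] using vs ne hd_in_set[OF ne] last_in_set[OF ne]
        unfolding liftE_def by (auto simp: insert_commute)
      moreover have "distinct (None # map Some vs)" using vs by (auto simp: distinct_map)
      moreover have "set (None # map Some vs) = liftV V" using vs unfolding liftV_def by auto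
      moreover have "length (None # map Some vs) \<ge> 3" using lv by simp
      ultimately have "cyc (None # map Some vs) \<in> ?HC" unfolding ham_cycles_cyc by blast
      moreover have "g (cyc (None # map Some vs)) = P" using g_lift[OF ne] vs unfolding g_def by simp
      ultimately show "P \<in> g ` ?HC" by (metis image_eqI)
    qed
  qed
  have inj: "inj_on g ?HC"
  proof (rule inj_onI)
    fix C1 C2 assume C1: "C1 \<in> ?HC" and C2: "C2 \<in> ?HC" and eq: "g C1 = g C2"
    obtain v1 where v1: "distinct v1" "set v1 = V" "v1 \<noteq> []" "C1 = cyc (None # map Some v1)"
      using HC_lift_rep[OF C1] by blast
    obtain v2 where v2: "distinct v2" "set v2 = V" "v2 \<noteq> []" "C2 = cyc (None # map Some v2)"
      using HC_lift_rep[OF C2] by blast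
    have pe: "path_edges v1 = path_edges v2" using eq v1 v2 g_lift unfolding g_def by metis
    have l1: "length v1 \<ge> 2" using v1 cV distinct_card by metis
    have "{hd v1, last v1} = {hd v2, last v2}" using endpoints_eq[OF v1(1) l1 v2(1) _ pe] v1 v2 by simp
    then show "C1 = C2" using v1 v2 pe by (auto simp: cyc_lift doubleton_eq_iff insert_commute)
  qed
  show ?thesis using card_image[OF inj] img by simp
qed

theorem mainTheorem9:
  fixes V :: "'a set" and E :: "'a set set" and x y :: 'a
  assumes "simple_graph V E" and "x \<in> V" and "y \<in> V" and "x \<noteq> y"
  shows "h0 V E \<ge> h0 V (diamond E x y) \<and> h1 V E \<ge> h1 V (diamond E x y)"
proof -
  have fV: "finite V" using assms(1) unfolding simple_graph_def by auto
  have nl: "{x} \<notin> E" using assms(1) unfolding simple_graph_def by (auto simp: doubleton_eq_iff)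
  have c0: "h0 V (diamond E x y) \<le> h0 V E"
    unfolding h0_def using cycle_main[OF assms(4) nl assms(2,3) fV] .
  have fV': "finite (liftV V)" using fV unfolding liftV_def by simp
  have xV: "Some x \<in> liftV V" "Some y \<in> liftV V" using assms unfolding liftV_def by auto
  have "h1 V (diamond E x y) = card (ham_cycles (liftV V) (liftE V (diamond E x y)))"
    unfolding h1_def using paths_cycles[OF assms(2,3,4) fV] .
  also have "\<dots> = card (ham_cycles (liftV V) (diamond (liftE V E) (Some x) (Some y)))"
    using diamond_lift[OF assms(2,3,4)] by simp
  also have "\<dots> \<le> card (ham_cycles (liftV V) (liftE V E))"
    using cycle_main[of "Some x" "Some y" "liftE V E", OF _ noloop_lift[OF nl] xV fV'] assms(4) by simp
  also have "\<dots> = h1 V E" unfolding h1_def using paths_cycles[OF assms(2,3,4) fV] by simp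
  finally show ?thesis using c0 by simp
qed

end
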